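(* Fix integers $0\le k\le n$ and on $\mathbb{C}^n=\mathbb{R}^n_x\oplus\sqrt{-1}\mathbb{R}^n_y$ let $\rho_1=\sum_{i=1}^n x_i^2$, $\rho_2=\sum_{i=1}^k x_i^2+\sum_{i=k+1}^n y_i^2$, $|x|:=\sqrt{\rho_1}$, $|y|:=\sqrt{\rho_2}$, and $L_1=\{\rho_1=0\}$, $L_2=\{\rho_2=0\}$. For $r>0$ set $V_r=\{|x|<r\}\cup\{|y|<r\}$. Then for $r>0$ small enough there exist $0<D<1$ and a nonnegative function $\beta_r:\mathbb{C}^n\to\mathbb{R}$ whose restriction to $V_{Dr}$ is weakly plurisubharmonic and which satisfies \[\beta_r=|y|^2\ \text{on}\ \{|x|\ge r\}\cap V_{Dr},\qquad \beta_r=|x|^2\ \text{on}\ \{|y|\ge r\}\cap V_{Dr}.\] Furthermore, $\beta_r$ vanishes at least to first order on $L_1$ and on $L_2$, and the pseudometric $dd^c\beta_r(\cdot,\sqrt{-1}\cdot)$ is dominated above by the Euclidean metric $g$ everywhere and is equivalent to $g$ on $\{|y|>r\}\cap V_{Dr}$ and on $\{|x|>r\}\cap V_{Dr}$.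
   Context: Weak plurisubharmonicity of a function $f$ means that the Levi form $dd^cf(\cdot,\sqrt{-1}\cdot)$ is positive semidefinite; this symmetric form is called the pseudometric induced by $f$. Two (pseudo)metrics are equivalent if each is bounded by a positive constant multiple of the other. *)

theory Defs
  imports "HOL-Analysis.Analysis"
begin

text \<open>We model \<open>\<complex>\<^sup>n\<close> as \<open>complex ^ 'n\<close> for a finite linearly ordered index type
  \<open>'n\<close> (so \<open>n = CARD('n)\<close>); the real coordinates are \<open>x_i = Re (z$i)\<close>, \<open>y_i = Im (z$i)\<close>.\<close>

definition first_coords :: "nat \<Rightarrow> ('n::{finite,linorder}) set" where
  "first_coords k = {i. card {j. j < i} < k}"

definition rho1 :: "complex ^ 'n \<Rightarrow> real" where
  "rho1 z = (\<Sum>i\<in>UNIV. (Re (z $ i))\<^sup>2)"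

definition rho2 :: "nat \<Rightarrow> complex ^ ('n::{finite,linorder}) \<Rightarrow> real" where
  "rho2 k z = (\<Sum>i\<in>first_coords k. (Re (z $ i))\<^sup>2) + (\<Sum>i\<in>UNIV - first_coords k. (Im (z $ i))\<^sup>2)"

definition Vset :: "nat \<Rightarrow> real \<Rightarrow> (complex ^ ('n::{finite,linorder})) set" where
  "Vset k r = {z. sqrt (rho1 z) < r} \<union> {z. sqrt (rho2 k z) < r}"

definition Jmul :: "complex ^ 'n \<Rightarrow> complex ^ 'n" where
  "Jmul v = (\<chi> i. \<i> * v $ i)"

definition hess :: "(complex ^ 'n \<Rightarrow> real) \<Rightarrow> complex ^ 'n \<Rightarrow> complex ^ 'n \<Rightarrow> complex ^ 'n \<Rightarrow> real" where
  "hess f p v w = frechet_derivative (\<lambda>q. frechet_derivative f (at q) v) (at p) w"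

text \<open>Levi form \<open>dd\<^sup>c f (v, \<surd>-1 v)\<close> (with \<open>d\<^sup>c = -df\<circ>J\<close>, i.e. \<open>dd\<^sup>c = 2\<i>\<partial>\<partial>bar\<close>).\<close>
definition levi_form :: "(complex ^ 'n \<Rightarrow> real) \<Rightarrow> complex ^ 'n \<Rightarrow> complex ^ 'n \<Rightarrow> real" where
  "levi_form f p v = hess f p v v + hess f p (Jmul v) (Jmul v)"

definition C2_on :: "(complex ^ 'n) set \<Rightarrow> (complex ^ 'n \<Rightarrow> real) \<Rightarrow> bool" where
  "C2_on U f \<longleftrightarrow>
     (\<forall>p\<in>U. f differentiable (at p)) \<and>
     (\<forall>v. \<forall>p\<in>U. (\<lambda>q. frechet_derivative f (at q) v) differentiable (at p)) \<and>
     (\<forall>v w. continuous_on U (\<lambda>p. hess f p v w))"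

definition weakly_psh_on :: "(complex ^ 'n) set \<Rightarrow> (complex ^ 'n \<Rightarrow> real) \<Rightarrow> bool" where
  "weakly_psh_on U f \<longleftrightarrow> C2_on U f \<and> (\<forall>p\<in>U. \<forall>v. levi_form f p v \<ge> 0)"

definition levi_dominated_on :: "(complex ^ 'n) set \<Rightarrow> (complex ^ 'n \<Rightarrow> real) \<Rightarrow> bool" where
  "levi_dominated_on S f \<longleftrightarrow> (\<exists>C>0. \<forall>p\<in>S. \<forall>v. levi_form f p v \<le> C * (norm v)\<^sup>2)"

definition levi_equiv_euclid_on :: "(complex ^ 'n) set \<Rightarrow> (complex ^ 'n \<Rightarrow> real) \<Rightarrow> bool" where
  "levi_equiv_euclid_on S f \<longleftrightarrow>
     (\<exists>c>0. \<exists>C>0. \<forall>p\<in>S. \<forall>v. c * (norm v)\<^sup>2 \<le> levi_form f p v \<and> levi_form f p v \<le> C * (norm v)\<^sup>2)"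

end

theory Submission
  imports Defs
begin

definition tp :: "nat \<Rightarrow> real \<Rightarrow> real" where "tp n x = (max 0 x) ^ n"

lemma tp_deriv0: "DERIV (tp (Suc (Suc m))) x :> real (Suc (Suc m)) * tp (Suc m) x"
proof (cases "x < 0")
  case True
  have ev: "eventually (\<lambda>y. tp (Suc (Suc m)) y = 0) (nhds x)"
    using eventually_nhds_in_open[of "{..<0}" x] True
    by (auto elim!: eventually_mono simp: tp_def)
  have "DERIV (\<lambda>y. 0) x :> 0" by simp
  then show ?thesis
    using True by (subst DERIV_cong_ev[OF refl ev]) (auto simp: tp_def)
next
  case False
  show ?thesis
  proof (cases "x > 0")
    case True
    have ev: "eventually (\<lambda>y. tp (Suc (Suc m)) y = y ^ Suc (Suc m)) (nhds x)"
      using eventually_nhds_in_open[of "{0<..}" x] True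
      by (auto elim!: eventually_mono simp: tp_def)
    have "DERIV (\<lambda>y. y ^ Suc (Suc m)) x :> real (Suc (Suc m)) * x ^ Suc m"
      by (rule derivative_eq_intros refl | simp)+
    then show ?thesis
      using True by (subst DERIV_cong_ev[OF refl ev]) (auto simp: tp_def)
  next
    case False
    with \<open>\<not> x < 0\<close> have x0: "x = 0" by auto
    have "((\<lambda>h. (tp (Suc (Suc m)) (0 + h) - tp (Suc (Suc m)) 0) / h) \<longlongrightarrow> 0) (at 0)"
    proof (rule Lim_null_comparison)
      show "eventually (\<lambda>h. norm ((tp (Suc (Suc m)) (0 + h) - tp (Suc (Suc m)) 0) / h) \<le> \<bar>h\<bar> ^ Suc m) (at 0)"
      proof (rule always_eventually, intro allI)
        fix h :: real
        have "norm ((tp (Suc (Suc m)) (0 + h) - tp (Suc (Suc m)) 0) / h) = (max 0 h) ^ Suc (Suc m) / \<bar>h\<bar>"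
          by (simp add: tp_def abs_divide)
        also have "\<dots> \<le> \<bar>h\<bar> ^ Suc m"
        proof (cases "h > 0")
          case True then show ?thesis by (simp add: field_simps)
        next
          case False then have "max 0 h = 0" by simp
          then have "max 0 h ^ Suc (Suc m) / \<bar>h\<bar> = 0" by simp
          moreover have "0 \<le> \<bar>h\<bar> ^ Suc m" by simp
          ultimately show ?thesis by linarith
        qed
        finally show "norm ((tp (Suc (Suc m)) (0 + h) - tp (Suc (Suc m)) 0) / h) \<le> \<bar>h\<bar> ^ Suc m" .
      qed
      show "((\<lambda>h. \<bar>h\<bar> ^ Suc m) \<longlongrightarrow> 0) (at (0::real))"
        by (rule tendsto_eq_intros refl | simp)+
    qed
    then show ?thesis using x0 by (simp add: DERIV_def tp_def)
  qed
qed

lemma tp_deriv[derivative_intros]: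
  assumes "(f has_real_derivative f') (at x within s)"
  shows "((\<lambda>x. tp (Suc (Suc m)) (f x)) has_real_derivative (real (Suc (Suc m)) * tp (Suc m) (f x) * f')) (at x within s)"
  using DERIV_chain2[OF tp_deriv0 assms] by simp

lemma tp_deriv2[derivative_intros]:
  assumes "(f has_real_derivative f') (at x within s)" "2 \<le> n"
  shows "((\<lambda>x. tp n (f x)) has_real_derivative (real n * tp (n - 1) (f x) * f')) (at x within s)"
proof -
  obtain m where n: "n = Suc (Suc m)" using assms(2) by (metis add_2_eq_Suc le_Suc_ex)
  show ?thesis using tp_deriv[OF assms(1), of m] n by simp
qed

lemma tp_cont[continuous_intros]: "continuous_on S f \<Longrightarrow> continuous_on S (\<lambda>x. tp n (f x))"
  unfolding tp_def by (intro continuous_intros)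

definition Rf :: "real \<Rightarrow> real" where
  "Rf u = 5/2 * tp 4 u - 3 * tp 5 u + tp 6 u - 5/2 * tp 4 (u - 1) - 3 * tp 5 (u - 1) - tp 6 (u - 1)"
definition Pe :: "real \<Rightarrow> real" where
  "Pe u = 10 * tp 3 u - 15 * tp 4 u + 6 * tp 5 u - 10 * tp 3 (u - 1) - 15 * tp 4 (u - 1) - 6 * tp 5 (u - 1)"
definition Pd :: "real \<Rightarrow> real" where
  "Pd u = 30 * tp 2 u - 60 * tp 3 u + 30 * tp 4 u - 30 * tp 2 (u - 1) - 60 * tp 3 (u - 1) - 30 * tp 4 (u - 1)"
definition Pdd :: "real \<Rightarrow> real" where
  "Pdd u = 60 * tp 1 u - 180 * tp 2 u + 120 * tp 3 u - 60 * tp 1 (u - 1) - 180 * tp 2 (u - 1) - 120 * tp 3 (u - 1)"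

definition G0 :: "real \<Rightarrow> real" where "G0 t = 4/3 * (t - Rf (2*t - 1) / 2)"
definition G1 :: "real \<Rightarrow> real" where "G1 t = 4/3 * (1 - Pe (2*t - 1))"
definition G2 :: "real \<Rightarrow> real" where "G2 t = - (8/3) * Pd (2*t - 1)"
definition G3 :: "real \<Rightarrow> real" where "G3 t = - (16/3) * Pdd (2*t - 1)"

lemma G0_deriv: "DERIV G0 t :> G1 t"
  unfolding G0_def G1_def Rf_def Pe_def
  by (rule derivative_eq_intros refl | simp)+ (simp add: field_simps)

lemma G1_deriv: "DERIV G1 t :> G2 t"
  unfolding G1_def G2_def Pd_def Pe_def
  by (rule derivative_eq_intros refl | simp)+ (simp add: field_simps)

lemma G2_deriv: "DERIV G2 t :> G3 t"
  unfolding G2_def G3_def Pd_def Pdd_def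
  by (rule derivative_eq_intros refl | simp)+

lemma G3_cont: "continuous_on UNIV G3"
  unfolding G3_def Pdd_def by (intro continuous_intros)

lemma G_low:
  assumes "t \<le> 1/2"
  shows "G0 t = 4/3 * t" "G1 t = 4/3" "G2 t = 0" "G3 t = 0"
proof -
  have a: "max 0 (2*t-1) = 0" "max 0 (2*t-1-1) = 0" using assms by auto
  show "G0 t = 4/3 * t" "G1 t = 4/3" "G2 t = 0" "G3 t = 0"
    unfolding G0_def G1_def G2_def G3_def Rf_def Pe_def Pd_def Pdd_def tp_def a by simp_all
qed

lemma G_high:
  assumes "1 \<le> t"
  shows "G0 t = 1" "G1 t = 0" "G2 t = 0" "G3 t = 0"
proof -
  have a: "max 0 (2*t-1) = 2*t-1" "max 0 (2*t-1-1) = 2*t-2" using assms by auto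
  show "G0 t = 1" "G1 t = 0" "G2 t = 0" "G3 t = 0"
    unfolding G0_def G1_def G2_def G3_def Rf_def Pe_def Pd_def Pdd_def tp_def a
    by (simp_all add: field_simps power2_eq_square power3_eq_cube power4_eq_xxxx power_def)
qed

lemma G_mid:
  assumes "1/2 \<le> t" "t \<le> 1"
  defines "u \<equiv> 2*t - 1"
  shows "G1 t = 4/3 * (1 - (10*u^3 - 15*u^4 + 6*u^5))"
    "G2 t = - (8/3) * (30*u^2*(1-u)^2)" "G3 t = - (16/3) * (60*u*(1-u)*(1-2*u))"
    "0 \<le> u" "u \<le> 1"
proof -
  have a: "max 0 (2*t-1) = u" "max 0 (2*t-1-1) = 0" using assms by auto
  show "G1 t = 4/3 * (1 - (10*u^3 - 15*u^4 + 6*u^5))"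
    "G2 t = - (8/3) * (30*u^2*(1-u)^2)" "G3 t = - (16/3) * (60*u*(1-u)*(1-2*u))"
    unfolding G0_def G1_def G2_def G3_def Rf_def Pe_def Pd_def Pdd_def tp_def a
    by (simp_all add: algebra_simps power2_eq_square power3_eq_cube power4_eq_xxxx)
  show "0 \<le> u" "u \<le> 1" using assms by auto
qed

lemma G1_bounds: "0 \<le> G1 t \<and> G1 t \<le> 4/3"
proof -
  consider "t \<le> 1/2" | "1 \<le> t" | "1/2 \<le> t \<and> t \<le> 1" by linarith
  then show ?thesis
  proof cases
    case 3
    define u where "u = 2*t - 1"
    have u: "0 \<le> u" "u \<le> 1" and g: "G1 t = 4/3 * (1 - (10*u^3 - 15*u^4 + 6*u^5))"
      using G_mid[of t] 3 unfolding u_def by auto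
    have e1: "10*u^3 - 15*u^4 + 6*u^5 = u^3 * (6*(u - 5/4)^2 + 5/8)"
      by (simp add: algebra_simps power2_eq_square power3_eq_cube power4_eq_xxxx power_def)
    have e2: "1 - (10*u^3 - 15*u^4 + 6*u^5) = (1-u)^3 * (6*u^2 + 3*u + 1)"
      by (simp add: algebra_simps power2_eq_square power3_eq_cube power4_eq_xxxx power_def)
    have "0 \<le> u^3 * (6*(u - 5/4)^2 + 5/8)" using u by simp
    moreover have "0 \<le> (1-u)^3 * (6*u^2 + 3*u + 1)" using u by simp
    ultimately show ?thesis using g e1 e2 by simp
  qed (auto simp: G_low G_high)
qed

lemma uq_bound: "0 \<le> (u::real) \<Longrightarrow> u \<le> 1 \<Longrightarrow> 0 \<le> u * (1-u) \<and> u * (1-u) \<le> 1/4"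
proof -
  assume u: "0 \<le> u" "u \<le> 1"
  have "u*(1-u) = 1/4 - (u-1/2)^2" by (simp add: algebra_simps power2_eq_square)
  moreover have "0 \<le> (u-1/2)^2" by simp
  moreover have "0 \<le> u*(1-u)" using u by simp
  ultimately show ?thesis by linarith
qed

lemma G2_bound: "\<bar>G2 t\<bar> \<le> 5 \<and> (0 \<le> t \<longrightarrow> t * \<bar>G2 t\<bar> \<le> 5)"
proof -
  consider "t \<le> 1/2" | "1 \<le> t" | "1/2 \<le> t \<and> t \<le> 1" by linarith
  then show ?thesis
  proof cases
    case 3
    define u where "u = 2*t - 1"
    have u: "0 \<le> u" "u \<le> 1" and g: "G2 t = - (8/3) * (30*u^2*(1-u)^2)"
      using G_mid[of t] 3 unfolding u_def by auto
    from uq_bound[OF u] have a: "0 \<le> u * (1-u)" "u*(1-u) \<le> 1/4" by auto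
    have "(u*(1-u))^2 \<le> (1/4)^2" using a by (intro power_mono) auto
    moreover have "(1/4::real)^2 = 1/16" by (simp add: power2_eq_square)
    ultimately have "(u*(1-u))^2 \<le> 1/16" by simp
    then have b: "u^2*(1-u)^2 \<le> 1/16" by (simp add: power_mult_distrib)
    have c: "0 \<le> u^2*(1-u)^2" by simp
    have "\<bar>G2 t\<bar> = 80 * (u^2*(1-u)^2)" using g c by simp
    then have d: "\<bar>G2 t\<bar> \<le> 5" using b by simp
    have "t * \<bar>G2 t\<bar> \<le> 1 * 5" using d 3 by (intro mult_mono) auto
    then show ?thesis using d by simp
  qed (auto simp: G_low G_high)
qed

lemma G3_bound: "\<bar>G3 t\<bar> \<le> 80 \<and> (0 \<le> t \<longrightarrow> t * \<bar>G3 t\<bar> \<le> 80)"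
proof -
  consider "t \<le> 1/2" | "1 \<le> t" | "1/2 \<le> t \<and> t \<le> 1" by linarith
  then show ?thesis
  proof cases
    case 3
    define u where "u = 2*t - 1"
    have u: "0 \<le> u" "u \<le> 1" and g: "G3 t = - (16/3) * (60*u*(1-u)*(1-2*u))"
      using G_mid[of t] 3 unfolding u_def by auto
    from uq_bound[OF u] have a: "0 \<le> u * (1-u)" "u*(1-u) \<le> 1/4" by auto
    have e: "\<bar>1-2*u\<bar> \<le> 1" using u by auto
    have "\<bar>u*(1-u)*(1-2*u)\<bar> = \<bar>u*(1-u)\<bar> * \<bar>1-2*u\<bar>" by (rule abs_mult)
    also have "\<dots> = (u*(1-u)) * \<bar>1-2*u\<bar>" using a by simp
    also have "\<dots> \<le> (1/4) * 1" using a e by (intro mult_mono) auto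
    finally have b: "\<bar>u*(1-u)*(1-2*u)\<bar> \<le> 1/4" by simp
    have "\<bar>G3 t\<bar> = 320 * \<bar>u*(1-u)*(1-2*u)\<bar>" using g by (simp add: abs_mult)
    then have d: "\<bar>G3 t\<bar> \<le> 80" using b by simp
    have "t * \<bar>G3 t\<bar> \<le> 1 * 80" using d 3 by (intro mult_mono) auto
    then show ?thesis using d by simp
  qed (auto simp: G_low G_high)
qed

lemma G1_tbound: "0 \<le> t \<Longrightarrow> t * G1 t \<le> 4/3"
proof -
  assume t: "0 \<le> t"
  show ?thesis
  proof (cases "t \<le> 1")
    case True
    have "t * G1 t \<le> 1 * (4/3)" using G1_bounds[of t] t True by (intro mult_mono) auto
    then show ?thesis by simp
  qed (simp add: G_high)
qed

lemma G0_mono: "s \<le> t \<Longrightarrow> G0 s \<le> G0 t"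
  by (rule DERIV_nonneg_imp_nondecreasing[of s t G0]) (use G0_deriv G1_bounds in blast)+

lemma G0_props: "0 \<le> t \<Longrightarrow> 0 \<le> G0 t \<and> G0 t \<le> 1" "1/2 \<le> t \<Longrightarrow> 2/3 \<le> G0 t"
proof -
  assume t: "0 \<le> t"
  have "G0 0 \<le> G0 t" using G0_mono t by blast
  moreover have "G0 t \<le> 1"
  proof (cases "t \<le> 1")
    case True then show ?thesis using G0_mono[OF True] G_high[of 1] by simp
  qed (simp add: G_high)
  ultimately show "0 \<le> G0 t \<and> G0 t \<le> 1" using G_low[of 0] by simp
next
  assume "1/2 \<le> t"
  then show "2/3 \<le> G0 t" using G0_mono[of "1/2" t] G_low[of "1/2"] by simp
qed

definition C2D :: "('a::real_normed_vector \<Rightarrow> real) \<Rightarrow> ('a \<Rightarrow> 'a \<Rightarrow> real) \<Rightarrow> ('a \<Rightarrow> 'a \<Rightarrow> 'a \<Rightarrow> real) \<Rightarrow> bool" where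
  "C2D f f1 f2 \<longleftrightarrow> (\<forall>q. (f has_derivative f1 q) (at q)) \<and>
     (\<forall>q v. ((\<lambda>q. f1 q v) has_derivative f2 q v) (at q)) \<and> (\<forall>v w. continuous_on UNIV (\<lambda>q. f2 q v w))"

lemma C2D_D:
  assumes "C2D f f1 f2"
  shows "(f has_derivative f1 q) (at q)" "((\<lambda>q. f1 q v) has_derivative f2 q v) (at q)"
    "continuous_on UNIV (\<lambda>q. f2 q v w)" "isCont f q" "isCont (\<lambda>q. f1 q v) q" "isCont (\<lambda>q. f2 q v w) q"
  using assms unfolding C2D_def
  by (auto intro: has_derivative_continuous simp: continuous_on_eq_continuous_at)

lemma C2D_lin:
  assumes "bounded_linear L"
  shows "C2D L (\<lambda>q. L) (\<lambda>q v w. 0)"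
  unfolding C2D_def using assms
  by (auto intro!: bounded_linear_imp_has_derivative has_derivative_const)

lemma C2D_const: "C2D (\<lambda>q. c) (\<lambda>q v. 0) (\<lambda>q v w. 0)"
  unfolding C2D_def by (auto intro!: has_derivative_const)

lemma C2D_add:
  assumes "C2D f f1 f2" "C2D g g1 g2"
  shows "C2D (\<lambda>q. f q + g q) (\<lambda>q v. f1 q v + g1 q v) (\<lambda>q v w. f2 q v w + g2 q v w)"
  unfolding C2D_def using C2D_D[OF assms(1)] C2D_D[OF assms(2)]
  by (auto intro!: has_derivative_add continuous_intros)

lemma C2D_mult:
  assumes "C2D f f1 f2" "C2D g g1 g2"
  shows "C2D (\<lambda>q. f q * g q) (\<lambda>q v. f1 q v * g q + f q * g1 q v)
     (\<lambda>q v w. f2 q v w * g q + f1 q v * g1 q w + f1 q w * g1 q v + f q * g2 q v w)"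
proof -
  note F = C2D_D[OF assms(1)] and G = C2D_D[OF assms(2)]
  have d1: "((\<lambda>q. f q * g q) has_derivative (\<lambda>v. f1 q v * g q + f q * g1 q v)) (at q)" for q
    by (rule has_derivative_eq_rhs[OF has_derivative_mult[OF F(1)[where q=q] G(1)[where q=q]]]) (auto simp: algebra_simps fun_eq_iff)
  have d2: "((\<lambda>q. f1 q v * g q + f q * g1 q v) has_derivative
      (\<lambda>w. f2 q v w * g q + f1 q v * g1 q w + f1 q w * g1 q v + f q * g2 q v w)) (at q)" for q v
    by (rule has_derivative_eq_rhs[OF has_derivative_add[OF has_derivative_mult[OF F(2)[where q=q and v=v] G(1)[where q=q]]
         has_derivative_mult[OF F(1)[where q=q] G(2)[where q=q and v=v]]]]) (auto simp: algebra_simps fun_eq_iff)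
  have c: "continuous_on UNIV (\<lambda>q. f2 q v w * g q + f1 q v * g1 q w + f1 q w * g1 q v + f q * g2 q v w)" for v w
    unfolding continuous_on_eq_continuous_at[OF open_UNIV]
    using F G by (auto intro!: continuous_intros)
  show ?thesis unfolding C2D_def using d1 d2 c by blast
qed

lemma C2D_comp:
  assumes "C2D f f1 f2"
    and "\<And>t. (\<phi> has_real_derivative \<phi>1 t) (at t)" "\<And>t. (\<phi>1 has_real_derivative \<phi>2 t) (at t)"
    and "continuous_on UNIV \<phi>2"
  shows "C2D (\<lambda>q. \<phi> (f q)) (\<lambda>q v. \<phi>1 (f q) * f1 q v)
     (\<lambda>q v w. \<phi>2 (f q) * f1 q w * f1 q v + \<phi>1 (f q) * f2 q v w)"
proof -
  note F = C2D_D[OF assms(1)]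
  have dphi: "(\<phi> has_derivative (\<lambda>h. \<phi>1 t * h)) (at t)" for t
    using assms(2)[of t] by (simp add: has_field_derivative_def)
  have dphi1: "(\<phi>1 has_derivative (\<lambda>h. \<phi>2 t * h)) (at t)" for t
    using assms(3)[of t] by (simp add: has_field_derivative_def)
  have d1: "((\<lambda>q. \<phi> (f q)) has_derivative (\<lambda>v. \<phi>1 (f q) * f1 q v)) (at q)" for q
    using has_derivative_compose[OF F(1)[where q=q] dphi] by simp
  have d2: "((\<lambda>q. \<phi>1 (f q) * f1 q v) has_derivative
      (\<lambda>w. \<phi>2 (f q) * f1 q w * f1 q v + \<phi>1 (f q) * f2 q v w)) (at q)" for q v
    by (rule has_derivative_eq_rhs[OF has_derivative_mult[OF has_derivative_compose[OF F(1)[where q=q] dphi1] F(2)[where q=q and v=v]]])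
      (auto simp: algebra_simps fun_eq_iff)
  have cphi2: "isCont \<phi>2 t" for t using assms(4) by (simp add: continuous_on_eq_continuous_at)
  have cphi1: "isCont \<phi>1 t" for t using assms(3) by (rule DERIV_isCont)
  have c: "continuous_on UNIV (\<lambda>q. \<phi>2 (f q) * f1 q w * f1 q v + \<phi>1 (f q) * f2 q v w)" for v w
    unfolding continuous_on_eq_continuous_at[OF open_UNIV]
    using F by (auto intro!: continuous_intros isCont_o2[OF _ cphi2] isCont_o2[OF _ cphi1])
  show ?thesis unfolding C2D_def using d1 d2 c by blast
qed

lemma C2D_sum:
  assumes "finite I" "\<And>i. i \<in> I \<Longrightarrow> C2D (f i) (f1 i) (f2 i)"
  shows "C2D (\<lambda>q. \<Sum>i\<in>I. f i q) (\<lambda>q v. \<Sum>i\<in>I. f1 i q v) (\<lambda>q v w. \<Sum>i\<in>I. f2 i q v w)"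
  using assms
proof (induction I rule: finite_induct)
  case empty
  then show ?case using C2D_const[of 0] by simp
next
  case (insert x F)
  then show ?case using C2D_add[of "f x" "f1 x" "f2 x"] by simp
qed

lemma C2D_cong:
  "C2D f f1 f2 \<Longrightarrow> (\<And>q. f q = g q) \<Longrightarrow> (\<And>q v. f1 q v = g1 q v) \<Longrightarrow> (\<And>q v w. f2 q v w = g2 q v w)
   \<Longrightarrow> C2D g g1 g2"
proof -
  assume "C2D f f1 f2" "\<And>q. f q = g q" "\<And>q v. f1 q v = g1 q v" "\<And>q v w. f2 q v w = g2 q v w"
  then have "f = g" "f1 = g1" "f2 = g2" by (auto intro!: ext)
  with \<open>C2D f f1 f2\<close> show ?thesis by simp
qed

definition "mul1 f f1 g g1 = (\<lambda>q v. f1 q v * g q + f q * g1 q v)"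
definition "mul2 f f1 f2 g g1 g2 = (\<lambda>q v w. f2 q v w * g q + f1 q v * g1 q w + f1 q w * g1 q v + f q * g2 q v w)"
definition "cmp1 \<phi>1 f f1 = (\<lambda>q v. \<phi>1 (f q) * f1 q v)"
definition "cmp2 \<phi>1 \<phi>2 f f1 f2 = (\<lambda>q v w. \<phi>2 (f q) * f1 q w * f1 q v + \<phi>1 (f q) * f2 q v w)"

lemma C2D_mult': "C2D f f1 f2 \<Longrightarrow> C2D g g1 g2 \<Longrightarrow> C2D (\<lambda>q. f q * g q) (mul1 f f1 g g1) (mul2 f f1 f2 g g1 g2)"
  unfolding mul1_def mul2_def by (rule C2D_mult)

lemma C2D_comp':
  "C2D f f1 f2 \<Longrightarrow> (\<And>t. (\<phi> has_real_derivative \<phi>1 t) (at t)) \<Longrightarrow> (\<And>t. (\<phi>1 has_real_derivative \<phi>2 t) (at t))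
   \<Longrightarrow> continuous_on UNIV \<phi>2 \<Longrightarrow> C2D (\<lambda>q. \<phi> (f q)) (cmp1 \<phi>1 f f1) (cmp2 \<phi>1 \<phi>2 f f1 f2)"
  unfolding cmp1_def cmp2_def by (rule C2D_comp)

lemma C2D_scale: "C2D f f1 f2 \<Longrightarrow> C2D (\<lambda>q. c * f q) (\<lambda>q v. c * f1 q v) (\<lambda>q v w. c * f2 q v w)"
  using C2D_mult[OF C2D_const[of c]] by (rule C2D_cong) auto

lemma lev_mul: "mul2 f f1 f2 g g1 g2 q v v + mul2 f f1 f2 g g1 g2 q u u =
   (f2 q v v + f2 q u u) * g q + f q * (g2 q v v + g2 q u u) + 2 * (f1 q v * g1 q v + f1 q u * g1 q u)"
  for f g :: "'a \<Rightarrow> real"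
  unfolding mul2_def by (simp add: algebra_simps)

lemma lev_cmp: "cmp2 \<phi>1 \<phi>2 f f1 f2 q v v + cmp2 \<phi>1 \<phi>2 f f1 f2 q u u =
   \<phi>1 (f q) * (f2 q v v + f2 q u u) + \<phi>2 (f q) * ((f1 q v)^2 + (f1 q u)^2)"
  for f2 :: "'a \<Rightarrow> 'b \<Rightarrow> 'b \<Rightarrow> real"
  unfolding cmp2_def by (simp add: algebra_simps power2_eq_square)

definition xr :: "real \<Rightarrow> 'n \<Rightarrow> complex ^ 'n \<Rightarrow> real" where "xr r i q = Re (q $ i) / r"
definition yr :: "real \<Rightarrow> 'n \<Rightarrow> complex ^ 'n \<Rightarrow> real" where "yr r i q = Im (q $ i) / r"
definition ur :: "'n set \<Rightarrow> real \<Rightarrow> 'n \<Rightarrow> complex ^ 'n \<Rightarrow> real" where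
  "ur F r i q = (if i \<in> F then Re (q $ i) else Im (q $ i)) / r"

definition Af :: "real \<Rightarrow> complex ^ ('n::finite) \<Rightarrow> real" where "Af r q = (\<Sum>i\<in>UNIV. xr r i q * xr r i q)"
definition A1 :: "real \<Rightarrow> complex ^ ('n::finite) \<Rightarrow> complex ^ 'n \<Rightarrow> real" where
  "A1 r q v = (\<Sum>i\<in>UNIV. 2 * (xr r i q * xr r i v))"
definition A2 :: "real \<Rightarrow> complex ^ ('n::finite) \<Rightarrow> complex ^ 'n \<Rightarrow> complex ^ 'n \<Rightarrow> real" where
  "A2 r q v w = (\<Sum>i\<in>UNIV. 2 * (xr r i v * xr r i w))"
definition Bf :: "'n set \<Rightarrow> real \<Rightarrow> complex ^ ('n::finite) \<Rightarrow> real" where "Bf F r q = (\<Sum>i\<in>UNIV. ur F r i q * ur F r i q)"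
definition B1 :: "'n set \<Rightarrow> real \<Rightarrow> complex ^ ('n::finite) \<Rightarrow> complex ^ 'n \<Rightarrow> real" where
  "B1 F r q v = (\<Sum>i\<in>UNIV. 2 * (ur F r i q * ur F r i v))"
definition B2 :: "'n set \<Rightarrow> real \<Rightarrow> complex ^ ('n::finite) \<Rightarrow> complex ^ 'n \<Rightarrow> complex ^ 'n \<Rightarrow> real" where
  "B2 F r q v w = (\<Sum>i\<in>UNIV. 2 * (ur F r i v * ur F r i w))"
definition Cf :: "'n set \<Rightarrow> real \<Rightarrow> complex ^ ('n::finite) \<Rightarrow> real" where "Cf F r q = (\<Sum>i\<in>UNIV - F. xr r i q * yr r i q)"
definition C1 :: "'n set \<Rightarrow> real \<Rightarrow> complex ^ ('n::finite) \<Rightarrow> complex ^ 'n \<Rightarrow> real" where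
  "C1 F r q v = (\<Sum>i\<in>UNIV - F. xr r i v * yr r i q + xr r i q * yr r i v)"
definition C2 :: "'n set \<Rightarrow> real \<Rightarrow> complex ^ ('n::finite) \<Rightarrow> complex ^ 'n \<Rightarrow> complex ^ 'n \<Rightarrow> real" where
  "C2 F r q v w = (\<Sum>i\<in>UNIV - F. xr r i v * yr r i w + xr r i w * yr r i v)"

lemma bl_re: "bounded_linear (\<lambda>q::complex^'n::finite. Re (q $ i) / r)"
  by (rule bounded_linear_compose[OF bounded_linear_divide bounded_linear_compose[OF bounded_linear_Re bounded_linear_vec_nth], simplified])
lemma bl_im: "bounded_linear (\<lambda>q::complex^'n::finite. Im (q $ i) / r)"
  by (rule bounded_linear_compose[OF bounded_linear_divide bounded_linear_compose[OF bounded_linear_Im bounded_linear_vec_nth], simplified])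
lemma bl_xr: "bounded_linear (xr r i)"
proof -
  have e: "xr r i = (\<lambda>q. Re (q $ i) / r)" by (simp add: fun_eq_iff xr_def)
  show ?thesis unfolding e by (rule bl_re)
qed
lemma bl_yr: "bounded_linear (yr r i)"
proof -
  have e: "yr r i = (\<lambda>q. Im (q $ i) / r)" by (simp add: fun_eq_iff yr_def)
  show ?thesis unfolding e by (rule bl_im)
qed
lemma bl_ur: "bounded_linear (ur F r i)"
proof (cases "i \<in> F")
  case True
  have e: "ur F r i = (\<lambda>q. Re (q $ i) / r)" using True by (simp add: fun_eq_iff ur_def)
  show ?thesis unfolding e by (rule bl_re)
next
  case False
  have e: "ur F r i = (\<lambda>q. Im (q $ i) / r)" using False by (simp add: fun_eq_iff ur_def)
  show ?thesis unfolding e by (rule bl_im)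
qed

lemma lin_add: "bounded_linear L \<Longrightarrow> L (v + w) = L v + L w"
  by (simp add: linear_simps)

lemma C2D_A: "C2D (Af r) (A1 r) (A2 r)"
proof -
  have "C2D (\<lambda>q. \<Sum>i\<in>UNIV. xr r i q * xr r i q)
     (\<lambda>q v. \<Sum>i\<in>UNIV. xr r i v * xr r i q + xr r i q * xr r i v)
     (\<lambda>q v w. \<Sum>i\<in>UNIV. 0 * xr r i q + xr r i v * xr r i w + xr r i w * xr r i v + xr r i q * 0)"
    by (intro C2D_sum C2D_mult C2D_lin bl_xr) auto
  then show ?thesis
    by (rule C2D_cong) (auto simp: Af_def A1_def A2_def algebra_simps intro!: sum.cong)
qed

lemma C2D_B: "C2D (Bf F r) (B1 F r) (B2 F r)"
proof -
  have "C2D (\<lambda>q. \<Sum>i\<in>UNIV. ur F r i q * ur F r i q)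
     (\<lambda>q v. \<Sum>i\<in>UNIV. ur F r i v * ur F r i q + ur F r i q * ur F r i v)
     (\<lambda>q v w. \<Sum>i\<in>UNIV. 0 * ur F r i q + ur F r i v * ur F r i w + ur F r i w * ur F r i v + ur F r i q * 0)"
    by (intro C2D_sum C2D_mult C2D_lin bl_ur) auto
  then show ?thesis
    by (rule C2D_cong) (auto simp: Bf_def B1_def B2_def algebra_simps intro!: sum.cong)
qed

lemma C2D_C: "C2D (Cf F r) (C1 F r) (C2 F r)"
proof -
  have "C2D (\<lambda>q. \<Sum>i\<in>UNIV - F. xr r i q * yr r i q)
     (\<lambda>q v. \<Sum>i\<in>UNIV - F. xr r i v * yr r i q + xr r i q * yr r i v)
     (\<lambda>q v w. \<Sum>i\<in>UNIV - F. 0 * yr r i q + xr r i v * yr r i w + xr r i w * yr r i v + xr r i q * 0)"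
    by (intro C2D_sum C2D_mult C2D_lin bl_xr bl_yr) auto
  then show ?thesis
    by (rule C2D_cong) (auto simp: Cf_def C1_def C2_def algebra_simps intro!: sum.cong)
qed

lemma xr_J[simp]: "xr r i (Jmul v) = - yr r i v" and yr_J[simp]: "yr r i (Jmul v) = xr r i v"
  by (simp_all add: xr_def yr_def Jmul_def)

lemma ur_J: "ur F r i (Jmul v) = (if i \<in> F then - yr r i v else xr r i v)"
  by (simp add: ur_def xr_def yr_def Jmul_def)

lemma ur_sq: "(ur F r i v)^2 + (ur F r i (Jmul v))^2 = (xr r i v)^2 + (yr r i v)^2"
  by (simp add: ur_J) (auto simp: ur_def xr_def yr_def)

lemma norm_sq_vec: "(norm (v :: complex ^ 'n))^2 = (\<Sum>i\<in>UNIV. (Re (v $ i))^2 + (Im (v $ i))^2)"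
  unfolding norm_vec_def L2_set_def
  by (simp add: sum_nonneg cmod_power2)

lemma nu_eq: "r \<noteq> 0 \<Longrightarrow> (norm (v :: complex ^ 'n))^2 / r^2 = (\<Sum>i\<in>UNIV. (xr r i v)^2 + (yr r i v)^2)"
  unfolding norm_sq_vec xr_def yr_def by (simp add: sum_divide_distrib power_divide add_divide_distrib)

lemma sum_split_F: "sum f (UNIV::'n::finite set) = sum f F + sum f (UNIV - F)"
  by (metis add.commute finite sum.subset_diff top_greatest)

lemma levA: "r \<noteq> 0 \<Longrightarrow> A2 r q v v + A2 r q (Jmul v) (Jmul v) = 2 * ((norm v)^2 / r^2)"
  unfolding nu_eq A2_def by (simp add: sum.distrib[symmetric] sum_distrib_left power2_eq_square algebra_simps)

lemma levB: "r \<noteq> 0 \<Longrightarrow> B2 F r q v v + B2 F r q (Jmul v) (Jmul v) = 2 * ((norm v)^2 / r^2)"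
proof -
  assume r: "r \<noteq> 0"
  have "B2 F r q v v + B2 F r q (Jmul v) (Jmul v) = (\<Sum>i\<in>UNIV. 2 * ((ur F r i v)^2 + (ur F r i (Jmul v))^2))"
    unfolding B2_def by (simp add: sum.distrib[symmetric] power2_eq_square algebra_simps)
  also have "\<dots> = 2 * ((norm v)^2 / r^2)" unfolding nu_eq[OF r] ur_sq by (simp add: sum_distrib_left)
  finally show ?thesis .
qed

lemma levC: "C2 F r q v v + C2 F r q (Jmul v) (Jmul v) = 0"
  unfolding C2_def by (simp add: sum.distrib[symmetric] algebra_simps)

lemma CS2: "(\<Sum>i\<in>I. a i * b i)^2 + (\<Sum>i\<in>I. a i * c i)^2 \<le> (\<Sum>i\<in>I. (a i)^2) * (\<Sum>i\<in>I. (b i)^2 + (c i)^2)"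
  for a b c :: "'a \<Rightarrow> real"
  using Cauchy_Schwarz_ineq_sum[of a b I] Cauchy_Schwarz_ineq_sum[of a c I]
  by (simp add: sum.distrib distrib_left)

lemma MA: "r \<noteq> 0 \<Longrightarrow> (A1 r q v)^2 + (A1 r q (Jmul v))^2 \<le> 4 * Af r q * ((norm v)^2 / r^2)"
proof -
  assume r: "r \<noteq> 0"
  have "(A1 r q v)^2 + (A1 r q (Jmul v))^2 = 4 * ((\<Sum>i\<in>UNIV. xr r i q * xr r i v)^2 + (\<Sum>i\<in>UNIV. xr r i q * (- yr r i v))^2)"
    unfolding A1_def by (simp add: sum_distrib_left[symmetric] power_mult_distrib sum_negf)
  also have "\<dots> \<le> 4 * ((\<Sum>i\<in>UNIV. (xr r i q)^2) * (\<Sum>i\<in>UNIV. (xr r i v)^2 + (- yr r i v)^2))"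
    using CS2[of "\<lambda>i. xr r i q" "\<lambda>i. xr r i v" UNIV "\<lambda>i. - yr r i v"] by simp
  also have "\<dots> = 4 * Af r q * ((norm v)^2 / r^2)"
    unfolding nu_eq[OF r] Af_def by (simp add: power2_eq_square)
  finally show ?thesis .
qed

lemma MB: "r \<noteq> 0 \<Longrightarrow> (B1 F r q v)^2 + (B1 F r q (Jmul v))^2 \<le> 4 * Bf F r q * ((norm v)^2 / r^2)"
proof -
  assume r: "r \<noteq> 0"
  have "(B1 F r q v)^2 + (B1 F r q (Jmul v))^2 = 4 * ((\<Sum>i\<in>UNIV. ur F r i q * ur F r i v)^2 + (\<Sum>i\<in>UNIV. ur F r i q * ur F r i (Jmul v))^2)"
    unfolding B1_def by (simp add: sum_distrib_left[symmetric] power_mult_distrib)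
  also have "\<dots> \<le> 4 * ((\<Sum>i\<in>UNIV. (ur F r i q)^2) * (\<Sum>i\<in>UNIV. (ur F r i v)^2 + (ur F r i (Jmul v))^2))"
    using CS2[of "\<lambda>i. ur F r i q" "\<lambda>i. ur F r i v" UNIV "\<lambda>i. ur F r i (Jmul v)"] by simp
  also have "\<dots> = 4 * Bf F r q * ((norm v)^2 / r^2)"
    unfolding nu_eq[OF r] Bf_def ur_sq by (simp add: power2_eq_square)
  finally show ?thesis .
qed

lemma ur_in: "i \<in> F \<Longrightarrow> ur F r i q = xr r i q" and ur_out: "i \<notin> F \<Longrightarrow> ur F r i q = yr r i q"
  by (simp_all add: ur_def xr_def yr_def)

lemma ID1: "A1 r q v - B1 F r q v = 2 * C1 F r q (Jmul v)"
proof -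
  have "A1 r q v - B1 F r q v = (\<Sum>i\<in>UNIV. 2 * (xr r i q * xr r i v) - 2 * (ur F r i q * ur F r i v))"
    unfolding A1_def B1_def by (simp add: sum_subtractf)
  also have "\<dots> = (\<Sum>i\<in>F. 2 * (xr r i q * xr r i v) - 2 * (ur F r i q * ur F r i v))
     + (\<Sum>i\<in>UNIV - F. 2 * (xr r i q * xr r i v) - 2 * (ur F r i q * ur F r i v))"
    by (rule sum_split_F)
  also have "(\<Sum>i\<in>F. 2 * (xr r i q * xr r i v) - 2 * (ur F r i q * ur F r i v)) = 0"
    by (rule sum.neutral) (simp add: ur_in)
  also have "(\<Sum>i\<in>UNIV - F. 2 * (xr r i q * xr r i v) - 2 * (ur F r i q * ur F r i v)) = 2 * C1 F r q (Jmul v)"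
    unfolding C1_def sum_distrib_left by (rule sum.cong) (auto simp: ur_out algebra_simps)
  finally show ?thesis by simp
qed

lemma ID2: "A1 r q (Jmul v) - B1 F r q (Jmul v) = - 2 * C1 F r q v"
proof -
  have "A1 r q (Jmul v) - B1 F r q (Jmul v) = (\<Sum>i\<in>UNIV. 2 * (xr r i q * xr r i (Jmul v)) - 2 * (ur F r i q * ur F r i (Jmul v)))"
    unfolding A1_def B1_def by (simp add: sum_subtractf)
  also have "\<dots> = (\<Sum>i\<in>F. 2 * (xr r i q * xr r i (Jmul v)) - 2 * (ur F r i q * ur F r i (Jmul v)))
     + (\<Sum>i\<in>UNIV - F. 2 * (xr r i q * xr r i (Jmul v)) - 2 * (ur F r i q * ur F r i (Jmul v)))"
    by (rule sum_split_F)
  also have "(\<Sum>i\<in>F. 2 * (xr r i q * xr r i (Jmul v)) - 2 * (ur F r i q * ur F r i (Jmul v))) = 0"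
    by (rule sum.neutral) (simp add: ur_in ur_J)
  also have "(\<Sum>i\<in>UNIV - F. 2 * (xr r i q * xr r i (Jmul v)) - 2 * (ur F r i q * ur F r i (Jmul v))) = - 2 * C1 F r q v"
    unfolding C1_def sum_distrib_left by (rule sum.cong) (auto simp: ur_out ur_J algebra_simps sum_negf)
  finally show ?thesis by (simp add: sum_negf C1_def)
qed

lemma A_nonneg: "0 \<le> Af r q" unfolding Af_def by (intro sum_nonneg) simp
lemma B_nonneg: "0 \<le> Bf F r q" unfolding Bf_def by (intro sum_nonneg) simp

lemma B_split: "Bf F r q = (\<Sum>i\<in>F. (xr r i q)^2) + (\<Sum>i\<in>UNIV - F. (yr r i q)^2)"
  unfolding Bf_def by (subst sum_split_F[of _ F]) (auto simp: ur_in ur_out power2_eq_square intro!: sum.cong)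

lemma CS_C: "(Cf F r q)^2 \<le> Af r q * Bf F r q"
proof -
  have "(Cf F r q)^2 \<le> (\<Sum>i\<in>UNIV - F. (xr r i q)^2) * (\<Sum>i\<in>UNIV - F. (yr r i q)^2)"
    unfolding Cf_def by (rule Cauchy_Schwarz_ineq_sum)
  also have "\<dots> \<le> Af r q * Bf F r q"
  proof (rule mult_mono)
    show "(\<Sum>i\<in>UNIV - F. (xr r i q)^2) \<le> Af r q"
      unfolding Af_def power2_eq_square by (rule sum_mono2) auto
    show "(\<Sum>i\<in>UNIV - F. (yr r i q)^2) \<le> Bf F r q"
      unfolding B_split by (simp add: sum_nonneg)
  qed (auto simp: sum_nonneg A_nonneg)
  finally show ?thesis .
qed

lemma A_zero: "Af r q = 0 \<Longrightarrow> A1 r q v = 0"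
proof -
  assume "Af r q = 0"
  then have "\<forall>i\<in>UNIV. xr r i q * xr r i q = 0" unfolding Af_def
    by (subst sum_nonneg_eq_0_iff[symmetric]) auto
  then show ?thesis unfolding A1_def by simp
qed

lemma B_zero: "Bf F r q = 0 \<Longrightarrow> B1 F r q v = 0"
proof -
  assume "Bf F r q = 0"
  then have "\<forall>i\<in>UNIV. ur F r i q * ur F r i q = 0" unfolding Bf_def
    by (subst sum_nonneg_eq_0_iff[symmetric]) auto
  then show ?thesis unfolding B1_def by simp
qed

lemma rho1_eq: "r \<noteq> 0 \<Longrightarrow> rho1 q = r^2 * Af r q"
  unfolding rho1_def Af_def xr_def by (simp add: sum_distrib_left power2_eq_square)

lemma rho2_eq: "r \<noteq> 0 \<Longrightarrow> rho2 k q = r^2 * Bf (first_coords k) r q"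
  unfolding rho2_def B_split xr_def yr_def by (simp add: sum_distrib_left distrib_left power2_eq_square)

definition levF :: "real \<Rightarrow> real \<Rightarrow> real \<Rightarrow> real \<Rightarrow> real \<Rightarrow> real \<Rightarrow> real \<Rightarrow> real \<Rightarrow> real \<Rightarrow> real \<Rightarrow> real \<Rightarrow> real \<Rightarrow> real" where
  "levF a b c da da' db db' dc dc' LA LB LC =
    (let MAA = da^2 + da'^2; MBB = db^2 + db'^2; MAB = da*db + da'*db'; MAC = da*dc + da'*dc';
         MBC = db*dc + db'*dc'; MCC = dc^2 + dc'^2;
         levGA = G1 a * LA + G2 a * MAA; levGB = G1 b * LB + G2 b * MBB;
         levX = G0 a * levGB + G0 b * levGA + 2 * G1 a * G1 b * MAB;
         levY = G1 a * (G2 b * LB + G3 b * MBB) + G1 b * (G2 a * LA + G3 a * MAA) + 2 * G2 a * G2 b * MAB;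
         Y = G1 a * G1 b;
         levZ = Y * (2*c*LC + 2*MCC) + c^2 * levY + 4*c*(G2 a * G1 b * MAC + G1 a * G2 b * MBC)
     in levX + 2 * levZ)"

definition beta :: "'n set \<Rightarrow> real \<Rightarrow> complex ^ ('n::finite) \<Rightarrow> real" where
  "beta F r q = (r^2 * (3/4)) * (G0 (Af r q) * G0 (Bf F r q) + 2 * ((G1 (Af r q) * G1 (Bf F r q)) * (Cf F r q * Cf F r q)))"

lemma G2_cont: "continuous_on UNIV G2"
  using G2_deriv DERIV_isCont continuous_at_imp_continuous_on by blast

lemma beta_C2D:
  "\<exists>b1 b2. C2D (beta F r) b1 b2 \<and>
     (\<forall>q v. b2 q v v + b2 q (Jmul v) (Jmul v) = (r^2 * (3/4)) *
        levF (Af r q) (Bf F r q) (Cf F r q) (A1 r q v) (A1 r q (Jmul v)) (B1 F r q v) (B1 F r q (Jmul v))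
          (C1 F r q v) (C1 F r q (Jmul v)) (A2 r q v v + A2 r q (Jmul v) (Jmul v))
          (B2 F r q v v + B2 F r q (Jmul v) (Jmul v)) (C2 F r q v v + C2 F r q (Jmul v) (Jmul v))) \<and>
     (\<forall>q v. b1 q v = (r^2 * (3/4)) * (G1 (Af r q) * A1 r q v * G0 (Bf F r q) + G0 (Af r q) * G1 (Bf F r q) * B1 F r q v
        + 2 * ((G2 (Af r q) * A1 r q v * G1 (Bf F r q) + G1 (Af r q) * G2 (Bf F r q) * B1 F r q v) * (Cf F r q * Cf F r q)
        + G1 (Af r q) * G1 (Bf F r q) * (2 * Cf F r q * C1 F r q v))))"
proof -
  note gA = C2D_comp'[OF C2D_A G0_deriv G1_deriv G2_cont, of r]
  note gB = C2D_comp'[OF C2D_B G0_deriv G1_deriv G2_cont, of F r]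
  note hA = C2D_comp'[OF C2D_A G1_deriv G2_deriv G3_cont, of r]
  note hB = C2D_comp'[OF C2D_B G1_deriv G2_deriv G3_cont, of F r]
  note X = C2D_mult'[OF gA gB]
  note Y = C2D_mult'[OF hA hB]
  note CC = C2D_mult'[OF C2D_C C2D_C, of F r F r]
  note Z = C2D_mult'[OF Y CC]
  note S = C2D_add[OF X C2D_scale[OF Z, of 2]]
  note T = C2D_scale[OF S, of "r^2 * (3/4)"]
  note T' = T[folded beta_def]
  show ?thesis
    apply (rule exI, rule exI, rule conjI, rule T')
    apply (rule conjI)
     apply (intro allI)
     apply (simp add: mul2_def cmp2_def mul1_def cmp1_def levF_def Let_def)
     apply (simp add: algebra_simps power2_eq_square)
    apply (simp add: mul2_def cmp2_def mul1_def cmp1_def)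
    done
qed

lemma abs_mul_le: "\<bar>x\<bar> \<le> X \<Longrightarrow> \<bar>y\<bar> \<le> Y \<Longrightarrow> \<bar>x * y\<bar> \<le> X * (Y::real)"
  by (simp add: abs_mult mult_mono' order_trans[OF abs_ge_zero])

lemma lin_abs: "4*m = s - 2*u \<Longrightarrow> 2*\<bar>u\<bar> \<le> s \<Longrightarrow> 2*(m::real) \<le> s"
  by linarith

lemma lin_h2: "2*\<bar>u\<bar> \<le> m + x \<Longrightarrow> 2*x \<le> p+m \<Longrightarrow> p \<le> 4*n \<Longrightarrow> m \<le> 4*n \<Longrightarrow> \<bar>u::real\<bar> \<le> 4*n"
  by linarith

lemma sq_bound: "2 * \<bar>x*y + x'*y'\<bar> \<le> x^2 + x'^2 + y^2 + (y'::real)^2"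
proof -
  have "0 \<le> (x-y)^2 + (x'-y')^2" "0 \<le> (x+y)^2 + (x'+y')^2" by simp_all
  moreover have "(x-y)^2 + (x'-y')^2 = x^2+x'^2+y^2+y'^2 - 2*(x*y+x'*y')"
    "(x+y)^2 + (x'+y')^2 = x^2+x'^2+y^2+y'^2 + 2*(x*y+x'*y')"
    by (simp_all add: power2_eq_square algebra_simps)
  ultimately have h1: "2*(x*y+x'*y') \<le> x^2+x'^2+y^2+y'^2" and h2: "-(2*(x*y+x'*y')) \<le> x^2+x'^2+y^2+y'^2"
    by linarith+
  show ?thesis
  proof (cases "0 \<le> x*y+x'*y'")
    case True then show ?thesis using h1 by simp
  next
    case False then show ?thesis using h2 by simp
  qed
qed

lemma levF_sym: "levF a b c da da' db db' dc dc' LA LB 0 = levF b a (-c) db db' da da' (-dc) (-dc') LB LA 0"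
  unfolding levF_def Let_def by (simp add: algebra_simps)

lemma levF_strip_eq:
  assumes "a \<le> 1/2" "da - db = 2*dc'" "da' - db' = -2*dc"
  shows "(3/4) * levF a b c da da' db db' dc dc' (2*\<nu>) (2*\<nu>) 0 =
    2 * G0 b * \<nu> + 2 * a * G1 b * \<nu> + G1 b * ((da^2 + da'^2) + (db^2 + db'^2)) + a * G2 b * (db^2 + db'^2)
    + 4 * c^2 * G2 b * \<nu> + 2 * c^2 * G3 b * (db^2 + db'^2) + 8 * c * G2 b * (db*dc + db'*dc')"
proof -
  have dc: "dc = (db' - da')/2" "dc' = (da - db)/2" using assms(2,3) by auto
  show ?thesis unfolding levF_def Let_def G_low[OF assms(1)] dc
    by (simp add: field_simps power2_eq_square)
qed

lemma levF_strip:
  assumes a: "0 \<le> a" "a < 1/1000000" and b: "0 \<le> b" and c: "c^2 \<le> a*b" and nu: "0 \<le> \<nu>"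
    and MA: "da^2 + da'^2 \<le> 4*a*\<nu>" and MB: "db^2 + db'^2 \<le> 4*b*\<nu>"
    and I1: "da - db = 2*dc'" and I2: "da' - db' = -2*dc"
  shows "0 \<le> levF a b c da da' db db' dc dc' (2*\<nu>) (2*\<nu>) 0"
    and "1 \<le> b \<Longrightarrow> levF a b c da da' db db' dc dc' (2*\<nu>) (2*\<nu>) 0 = 8/3 * \<nu>"
proof -
  have a12: "a \<le> 1/2" using a by simp
  note E = levF_strip_eq[OF a12 I1 I2, of b c \<nu>]
  define MAA where "MAA = da^2 + da'^2"
  define MBB where "MBB = db^2 + db'^2"
  define MBC where "MBC = db*dc + db'*dc'"
  have MAA0: "0 \<le> MAA" and MBB0: "0 \<le> MBB" unfolding MAA_def MBB_def by simp_all
  have T: "(3/4) * levF a b c da da' db db' dc dc' (2*\<nu>) (2*\<nu>) 0 =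
    2 * G0 b * \<nu> + 2 * a * G1 b * \<nu> + G1 b * (MAA + MBB) + (a * G2 b * MBB
    + 4 * c^2 * G2 b * \<nu> + 2 * c^2 * G3 b * MBB + 8 * c * G2 b * MBC)"
    using E unfolding MAA_def MBB_def MBC_def by simp
  have P: "0 \<le> 2 * a * G1 b * \<nu> + G1 b * (MAA + MBB)"
    using G1_bounds[of b] a nu MAA0 MBB0 by simp
  show "1 \<le> b \<Longrightarrow> levF a b c da da' db db' dc dc' (2*\<nu>) (2*\<nu>) 0 = 8/3 * \<nu>"
    using T G_high[of b] by simp
  consider "b \<le> 1/2" | "1 \<le> b" | "1/2 \<le> b \<and> b \<le> 1" by linarith
  then have "0 \<le> (3/4) * levF a b c da da' db db' dc dc' (2*\<nu>) (2*\<nu>) 0"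
  proof cases
    case 1
    have "0 \<le> 2*G0 b*\<nu>" using G0_props(1)[OF b] nu by simp
    moreover have "(3/4) * levF a b c da da' db db' dc dc' (2*\<nu>) (2*\<nu>) 0 = 2 * G0 b * \<nu> + (2 * a * G1 b * \<nu> + G1 b * (MAA + MBB))"
      using T G_low(3,4)[OF 1] by simp
    ultimately show ?thesis using P by linarith
  next
    case 2
    then show ?thesis using T G_high[OF 2] nu by simp
  next
    case 3
    have g0: "2/3 \<le> G0 b" using G0_props(2) 3 by simp
    have g2: "\<bar>G2 b\<bar> \<le> 5" and g3: "\<bar>G3 b\<bar> \<le> 80" using G2_bound G3_bound by auto
    have "b * \<nu> \<le> 1 * \<nu>" using 3 nu by (intro mult_right_mono) auto
    then have MBB4: "MBB \<le> 4 * \<nu>" using MB unfolding MBB_def by simp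
    have "a * \<nu> \<le> 1 * \<nu>" using a nu by (intro mult_right_mono) auto
    then have MAA4: "MAA \<le> 4 * \<nu>" using MA unfolding MAA_def by simp
    have "a * b \<le> a * 1" using 3 a by (intro mult_left_mono) auto
    then have ca: "c^2 \<le> a" using c by simp
    have "\<bar>c\<bar> \<le> 1/1000"
    proof -
      have "c^2 \<le> (1/1000)^2" using ca a by (simp add: power2_eq_square)
      then show ?thesis using abs_le_square_iff[of c "1/1000"] by simp
    qed
    have MCC: "2*(dc^2 + dc'^2) \<le> MAA + MBB"
    proof -
      have h: "dc = (db' - da')/2" "dc' = (da - db)/2" using I1 I2 by auto
      have "4*(dc^2 + dc'^2) = MAA + MBB - 2*(da*db + da'*db')"
        unfolding MAA_def MBB_def h by (simp add: power2_eq_square field_simps)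
      moreover have "2 * \<bar>da*db + da'*db'\<bar> \<le> MAA + MBB" unfolding MAA_def MBB_def using sq_bound[of da db da' db'] by linarith
      ultimately show ?thesis by (rule lin_abs)
    qed
    have MBC4: "\<bar>MBC\<bar> \<le> 4 * \<nu>"
    proof -
      have "2 * \<bar>MBC\<bar> \<le> MBB + (dc^2 + dc'^2)" unfolding MBC_def MBB_def using sq_bound[of db dc db' dc'] by linarith
      then show ?thesis using lin_h2 MCC MAA4 MBB4 by blast
    qed
    have e1: "\<bar>a * G2 b * MBB\<bar> \<le> (a * 5) * (4 * \<nu>)"
      by (intro abs_mul_le) (use a g2 MBB0 MBB4 in auto)
    have e2: "\<bar>4 * c^2 * G2 b * \<nu>\<bar> \<le> ((4 * a) * 5) * \<nu>"
      by (intro abs_mul_le) (use ca nu g2 in auto)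
    have e3: "\<bar>2 * c^2 * G3 b * MBB\<bar> \<le> ((2 * a) * 80) * (4 * \<nu>)"
      by (intro abs_mul_le) (use ca nu g3 MBB0 MBB4 in auto)
    have e4: "\<bar>8 * c * G2 b * MBC\<bar> \<le> ((8 * (1/1000)) * 5) * (4 * \<nu>)"
      by (intro abs_mul_le) (use \<open>\<bar>c\<bar> \<le> 1/1000\<close> g2 MBC4 in auto)
    have "a * \<nu> \<le> (1/1000000) * \<nu>" using a nu by (intro mult_right_mono) auto
    then have "\<bar>a * G2 b * MBB + 4 * c^2 * G2 b * \<nu> + 2 * c^2 * G3 b * MBB + 8 * c * G2 b * MBC\<bar> \<le> \<nu>"
      using e1 e2 e3 e4 nu by (simp add: algebra_simps)
    moreover have "(2/3) * \<nu> \<le> G0 b * \<nu>" by (rule mult_right_mono[OF g0 nu])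
    ultimately show ?thesis using T P nu by linarith
  qed
  then show "0 \<le> levF a b c da da' db db' dc dc' (2*\<nu>) (2*\<nu>) 0" by simp
qed

lemma abs_add_le: "\<bar>x\<bar> \<le> X \<Longrightarrow> \<bar>y\<bar> \<le> Y \<Longrightarrow> \<bar>x + y\<bar> \<le> X + (Y::real)"
  using abs_triangle_ineq[of x y] by linarith

lemma levF_dom_high:
  assumes a: "1 \<le> a" and b: "0 \<le> b" and nu: "0 \<le> \<nu>" and MB: "db^2 + db'^2 \<le> 4*b*\<nu>"
  shows "\<bar>levF a b c da da' db db' dc dc' (2*\<nu>) (2*\<nu>) 0\<bar> \<le> 3000 * \<nu>"
proof -
  have e: "levF a b c da da' db db' dc dc' (2*\<nu>) (2*\<nu>) 0 = G1 b * (2*\<nu>) + G2 b * (db^2 + db'^2)"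
    unfolding levF_def Let_def G_high[OF a] by simp
  have g1: "\<bar>G1 b\<bar> \<le> 4/3" using G1_bounds[of b] by simp
  have "\<bar>G2 b * (db^2 + db'^2)\<bar> \<le> \<bar>G2 b\<bar> * (4*b*\<nu>)"
    by (simp add: abs_mult mult_left_mono MB)
  also have "\<dots> = 4 * \<nu> * (b * \<bar>G2 b\<bar>)" by simp
  also have "\<dots> \<le> 4 * \<nu> * 5" using G2_bound[of b] b nu by (intro mult_left_mono) auto
  finally have t2: "\<bar>G2 b * (db^2 + db'^2)\<bar> \<le> 20 * \<nu>" by simp
  have t1: "\<bar>G1 b * (2*\<nu>)\<bar> \<le> (4/3) * (2*\<nu>)" by (rule abs_mul_le) (use g1 nu in auto)
  show ?thesis unfolding e using abs_add_le[OF t1 t2] nu by simp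
qed

lemma levF_dom_mid:
  assumes a: "0 \<le> a" "a \<le> 1" and b: "0 \<le> b" "b \<le> 1" and c: "c^2 \<le> a*b" and nu: "0 \<le> \<nu>"
    and MA: "da^2 + da'^2 \<le> 4*a*\<nu>" and MB: "db^2 + db'^2 \<le> 4*b*\<nu>"
    and I1: "da - db = 2*dc'" and I2: "da' - db' = -2*dc"
  shows "\<bar>levF a b c da da' db db' dc dc' (2*\<nu>) (2*\<nu>) 0\<bar> \<le> 3000 * \<nu>"
proof -
  define MAA where "MAA = da^2 + da'^2"
  define MBB where "MBB = db^2 + db'^2"
  define MAB where "MAB = da*db + da'*db'"
  define MAC where "MAC = da*dc + da'*dc'"
  define MBC where "MBC = db*dc + db'*dc'"
  define MCC where "MCC = dc^2 + dc'^2"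
  define levX where "levX = G0 a * (G1 b * (2*\<nu>) + G2 b * MBB) + G0 b * (G1 a * (2*\<nu>) + G2 a * MAA) + 2 * G1 a * G1 b * MAB"
  define levY where "levY = G1 a * (G2 b * (2*\<nu>) + G3 b * MBB) + G1 b * (G2 a * (2*\<nu>) + G3 a * MAA) + 2 * G2 a * G2 b * MAB"
  define levZ where "levZ = (G1 a * G1 b) * (2*c*0 + 2*MCC) + c^2 * levY + 4*c*(G2 a * G1 b * MAC + G1 a * G2 b * MBC)"
  have e: "levF a b c da da' db db' dc dc' (2*\<nu>) (2*\<nu>) 0 = levX + 2 * levZ"
    unfolding levF_def Let_def levX_def levY_def levZ_def MAA_def MBB_def MAB_def MAC_def MBC_def MCC_def ..
  have MAA0: "0 \<le> MAA" and MBB0: "0 \<le> MBB" and MCC0: "0 \<le> MCC" unfolding MAA_def MBB_def MCC_def by simp_all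
  have "a * \<nu> \<le> 1 * \<nu>" using a nu by (intro mult_right_mono) auto
  then have MAA4: "MAA \<le> 4 * \<nu>" using MA unfolding MAA_def by simp
  have "b * \<nu> \<le> 1 * \<nu>" using b nu by (intro mult_right_mono) auto
  then have MBB4: "MBB \<le> 4 * \<nu>" using MB unfolding MBB_def by simp
  have MAB4: "\<bar>MAB\<bar> \<le> 4*\<nu>"
  proof -
    have "2 * \<bar>MAB\<bar> \<le> MAA + MBB" unfolding MAB_def MAA_def MBB_def using sq_bound[of da db da' db'] by linarith
    then show ?thesis using MAA4 MBB4 by linarith
  qed
  have MCC4: "MCC \<le> 4*\<nu>"
  proof -
    have h: "dc = (db' - da')/2" "dc' = (da - db)/2" using I1 I2 by auto
    have "4*MCC = MAA + MBB - 2*MAB"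
      unfolding MCC_def MAA_def MBB_def MAB_def h by (simp add: power2_eq_square field_simps)
    then show ?thesis using MAB4 MAA4 MBB4 abs_ge_minus_self[of MAB] by linarith
  qed
  have MAC4: "\<bar>MAC\<bar> \<le> 4*\<nu>"
  proof -
    have "2 * \<bar>MAC\<bar> \<le> MAA + MCC" unfolding MAC_def MAA_def MCC_def using sq_bound[of da dc da' dc'] by linarith
    then show ?thesis using MAA4 MCC4 by linarith
  qed
  have MBC4: "\<bar>MBC\<bar> \<le> 4*\<nu>"
  proof -
    have "2 * \<bar>MBC\<bar> \<le> MBB + MCC" unfolding MBC_def MBB_def MCC_def using sq_bound[of db dc db' dc'] by linarith
    then show ?thesis using MBB4 MCC4 by linarith
  qed
  have ab: "a*b \<le> 1" using a b by (simp add: mult_le_one)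
  have c2: "\<bar>c^2\<bar> \<le> 1" using c ab by simp
  have c1: "\<bar>c\<bar> \<le> 1"
  proof -
    have "c^2 \<le> 1^2" using c ab by simp
    then show ?thesis using abs_le_square_iff[of c 1] by simp
  qed
  have g0a: "\<bar>G0 a\<bar> \<le> 1" and g0b: "\<bar>G0 b\<bar> \<le> 1" using G0_props(1) a b by auto
  have g1a: "\<bar>G1 a\<bar> \<le> 4/3" and g1b: "\<bar>G1 b\<bar> \<le> 4/3" using G1_bounds by auto
  have g2a: "\<bar>G2 a\<bar> \<le> 5" and g2b: "\<bar>G2 b\<bar> \<le> 5" using G2_bound by auto
  have g3a: "\<bar>G3 a\<bar> \<le> 80" and g3b: "\<bar>G3 b\<bar> \<le> 80" using G3_bound by auto
  have n2: "\<bar>2*\<nu>\<bar> \<le> 2*\<nu>" and n4a: "\<bar>MAA\<bar> \<le> 4*\<nu>" and n4b: "\<bar>MBB\<bar> \<le> 4*\<nu>"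
    and n4c: "\<bar>2*c*0 + 2*MCC\<bar> \<le> 8*\<nu>"
    using nu MAA0 MBB0 MCC0 MAA4 MBB4 MCC4 by auto
  note B = abs_mul_le abs_add_le
  have X1: "\<bar>G0 a * (G1 b * (2*\<nu>) + G2 b * MBB)\<bar> \<le> 1 * ((4/3) * (2*\<nu>) + 5 * (4*\<nu>))"
    by (intro B g0a g1b g2b n2 n4b)
  have X2: "\<bar>G0 b * (G1 a * (2*\<nu>) + G2 a * MAA)\<bar> \<le> 1 * ((4/3) * (2*\<nu>) + 5 * (4*\<nu>))"
    by (intro B g0b g1a g2a n2 n4a)
  have X3: "\<bar>2 * G1 a * G1 b * MAB\<bar> \<le> 2 * (4/3) * (4/3) * (4*\<nu>)"
    by (intro B g1a g1b MAB4) simp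
  have LX: "\<bar>levX\<bar> \<le> 61 * \<nu>" unfolding levX_def using abs_add_le[OF abs_add_le[OF X1 X2] X3] nu by simp
  have Y1: "\<bar>G1 a * (G2 b * (2*\<nu>) + G3 b * MBB)\<bar> \<le> (4/3) * (5 * (2*\<nu>) + 80 * (4*\<nu>))"
    by (intro B g1a g2b g3b n2 n4b)
  have Y2: "\<bar>G1 b * (G2 a * (2*\<nu>) + G3 a * MAA)\<bar> \<le> (4/3) * (5 * (2*\<nu>) + 80 * (4*\<nu>))"
    by (intro B g1b g2a g3a n2 n4a)
  have Y3: "\<bar>2 * G2 a * G2 b * MAB\<bar> \<le> 2 * 5 * 5 * (4*\<nu>)"
    by (intro B g2a g2b MAB4) simp
  have LY: "\<bar>levY\<bar> \<le> 1080 * \<nu>" unfolding levY_def using abs_add_le[OF abs_add_le[OF Y1 Y2] Y3] nu by simp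
  have Z1: "\<bar>(G1 a * G1 b) * (2*c*0 + 2*MCC)\<bar> \<le> ((4/3) * (4/3)) * (8*\<nu>)"
    by (intro B g1a g1b n4c)
  have Z2: "\<bar>c^2 * levY\<bar> \<le> 1 * (1080 * \<nu>)" by (intro B c2 LY)
  have Z3: "\<bar>4*c*(G2 a * G1 b * MAC + G1 a * G2 b * MBC)\<bar> \<le> (4*1) * (5 * (4/3) * (4*\<nu>) + (4/3) * 5 * (4*\<nu>))"
    by (intro B g1a g1b g2a g2b MAC4 MBC4 c1) simp
  have LZ: "\<bar>levZ\<bar> \<le> 1309 * \<nu>" unfolding levZ_def using abs_add_le[OF abs_add_le[OF Z1 Z2] Z3] nu by simp
  have "\<bar>levX + 2 * levZ\<bar> \<le> \<bar>levX\<bar> + 2 * \<bar>levZ\<bar>" using abs_triangle_ineq[of levX "2*levZ"] by simp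
  then show ?thesis unfolding e using LX LZ nu by linarith
qed

lemma levF_dom:
  assumes a: "0 \<le> a" and b: "0 \<le> b" and c: "c^2 \<le> a*b" and nu: "0 \<le> \<nu>"
    and MA: "da^2 + da'^2 \<le> 4*a*\<nu>" and MB: "db^2 + db'^2 \<le> 4*b*\<nu>"
    and I1: "da - db = 2*dc'" and I2: "da' - db' = -2*dc"
  shows "\<bar>levF a b c da da' db db' dc dc' (2*\<nu>) (2*\<nu>) 0\<bar> \<le> 3000 * \<nu>"
proof (cases "1 \<le> a")
  case True then show ?thesis using levF_dom_high b nu MB by blast
next
  case False
  show ?thesis
  proof (cases "1 \<le> b")
    case True
    have "\<bar>levF b a (-c) db db' da da' (-dc) (-dc') (2*\<nu>) (2*\<nu>) 0\<bar> \<le> 3000 * \<nu>"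
      using levF_dom_high[OF True a nu MA] .
    then show ?thesis using levF_sym by simp
  next
    case False
    then show ?thesis using levF_dom_mid[OF a _ b _ c nu MA MB I1 I2] \<open>\<not> 1 \<le> a\<close> by simp
  qed
qed

lemma C2D_frechet: "C2D f f1 f2 \<Longrightarrow> frechet_derivative f (at q) = f1 q"
  using C2D_D(1) frechet_derivative_at by metis

lemma C2D_hess: "C2D f f1 f2 \<Longrightarrow> hess f p v w = f2 p v w"
proof -
  assume c: "C2D f f1 f2"
  have "(\<lambda>q. frechet_derivative f (at q) v) = (\<lambda>q. f1 q v)" using C2D_frechet[OF c] by simp
  then show ?thesis unfolding hess_def using C2D_D(2)[OF c] frechet_derivative_at by metis
qed

lemma C2D_C2_on: "C2D f f1 f2 \<Longrightarrow> C2_on U f"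
proof -
  assume c: "C2D f f1 f2"
  have e: "(\<lambda>q. frechet_derivative f (at q) v) = (\<lambda>q. f1 q v)" for v using C2D_frechet[OF c] by simp
  have h: "(\<lambda>p. hess f p v w) = (\<lambda>p. f2 p v w)" for v w using C2D_hess[OF c] by simp
  show ?thesis unfolding C2_on_def e h
    using C2D_D[OF c] continuous_on_subset[OF C2D_D(3)[OF c]]
    by (auto simp: differentiable_def)
qed

lemma C2D_levi: "C2D f f1 f2 \<Longrightarrow> levi_form f p v = f2 p v v + f2 p (Jmul v) (Jmul v)"
  unfolding levi_form_def using C2D_hess by metis

lemma sqrt_lt_iff: "0 < r \<Longrightarrow> 0 < t \<Longrightarrow> sqrt (r^2 * A) < t * r \<longleftrightarrow> A < t^2"
proof -
  assume r: "0 < r" and t: "0 < t"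
  have e: "sqrt (r^2 * A) = r * sqrt A" using r by (simp add: real_sqrt_mult)
  have "r * sqrt A < t * r \<longleftrightarrow> sqrt A < t" using r by (simp add: mult.commute)
  also have "\<dots> \<longleftrightarrow> sqrt A < sqrt (t^2)" using t by simp
  also have "\<dots> \<longleftrightarrow> A < t^2" by (rule real_sqrt_less_iff)
  finally show ?thesis using e by simp
qed

lemma beta_nonneg: "0 \<le> beta F r q"
proof -
  have "0 \<le> G0 (Af r q)" "0 \<le> G0 (Bf F r q)" using G0_props(1) A_nonneg B_nonneg by blast+
  moreover have "0 \<le> G1 (Af r q)" "0 \<le> G1 (Bf F r q)" using G1_bounds by blast+
  ultimately show ?thesis unfolding beta_def by simp
qed

lemma main_r:
  fixes r :: real and k :: nat
  assumes r: "0 < r"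
  shows "\<exists>D (\<beta> :: complex ^ ('n::{finite,linorder}) \<Rightarrow> real). 0 < D \<and> D < 1 \<and>
       (\<forall>z. \<beta> z \<ge> 0) \<and>
       C2_on UNIV \<beta> \<and>
       weakly_psh_on (Vset k (D * r)) \<beta> \<and>
       (\<forall>z \<in> Vset k (D * r). sqrt (rho1 z) \<ge> r \<longrightarrow> \<beta> z = rho2 k z) \<and>
       (\<forall>z \<in> Vset k (D * r). sqrt (rho2 k z) \<ge> r \<longrightarrow> \<beta> z = rho1 z) \<and>
       (\<forall>z. rho1 z = 0 \<longrightarrow> \<beta> z = 0 \<and> frechet_derivative \<beta> (at z) = (\<lambda>v. 0)) \<and>
       (\<forall>z. rho2 k z = 0 \<longrightarrow> \<beta> z = 0 \<and> frechet_derivative \<beta> (at z) = (\<lambda>v. 0)) \<and>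
       levi_dominated_on UNIV \<beta> \<and>
       levi_equiv_euclid_on ({z. sqrt (rho2 k z) > r} \<inter> Vset k (D * r)) \<beta> \<and>
       levi_equiv_euclid_on ({z. sqrt (rho1 z) > r} \<inter> Vset k (D * r)) \<beta>"
proof -
  have r0: "r \<noteq> 0" using r by simp
  define F :: "'n set" where "F = first_coords k"
  define D :: real where "D = 1/1000"
  have D2: "D^2 = 1/1000000" unfolding D_def by (simp add: power2_eq_square)
  obtain b1 b2 where C: "C2D (beta F r) b1 b2"
    and L2: "\<And>q v. b2 q v v + b2 q (Jmul v) (Jmul v) = (r^2 * (3/4)) *
        levF (Af r q) (Bf F r q) (Cf F r q) (A1 r q v) (A1 r q (Jmul v)) (B1 F r q v) (B1 F r q (Jmul v))
          (C1 F r q v) (C1 F r q (Jmul v)) (A2 r q v v + A2 r q (Jmul v) (Jmul v))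
          (B2 F r q v v + B2 F r q (Jmul v) (Jmul v)) (C2 F r q v v + C2 F r q (Jmul v) (Jmul v))"
    and L1: "\<And>q v. b1 q v = (r^2 * (3/4)) * (G1 (Af r q) * A1 r q v * G0 (Bf F r q) + G0 (Af r q) * G1 (Bf F r q) * B1 F r q v
        + 2 * ((G2 (Af r q) * A1 r q v * G1 (Bf F r q) + G1 (Af r q) * G2 (Bf F r q) * B1 F r q v) * (Cf F r q * Cf F r q)
        + G1 (Af r q) * G1 (Bf F r q) * (2 * Cf F r q * C1 F r q v)))"
    using beta_C2D[of F r] by blast
  have nu0: "0 \<le> ((norm v)^2 / r^2)" for v by simp
  have LEV: "levi_form (beta F r) z v = (r^2 * (3/4)) *
      levF (Af r z) (Bf F r z) (Cf F r z) (A1 r z v) (A1 r z (Jmul v)) (B1 F r z v) (B1 F r z (Jmul v))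
          (C1 F r z v) (C1 F r z (Jmul v)) (2 * ((norm v)^2 / r^2)) (2 * ((norm v)^2 / r^2)) 0" for z v
    unfolding C2D_levi[OF C] L2 levA[OF r0] levB[OF r0] levC ..
  have LEVsym: "levi_form (beta F r) z v = (r^2 * (3/4)) *
      levF (Bf F r z) (Af r z) (- Cf F r z) (B1 F r z v) (B1 F r z (Jmul v)) (A1 r z v) (A1 r z (Jmul v))
          (- C1 F r z v) (- C1 F r z (Jmul v)) (2 * ((norm v)^2 / r^2)) (2 * ((norm v)^2 / r^2)) 0" for z v
    unfolding LEV levF_sym[of "Af r z" "Bf F r z"] ..
  have MA': "(A1 r z v)^2 + (A1 r z (Jmul v))^2 \<le> 4 * Af r z * ((norm v)^2 / r^2)" for z v
    using MA[OF r0] .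
  have MB': "(B1 F r z v)^2 + (B1 F r z (Jmul v))^2 \<le> 4 * Bf F r z * ((norm v)^2 / r^2)" for z v
    using MB[OF r0] .
  have I1: "A1 r z v - B1 F r z v = 2 * C1 F r z (Jmul v)" for z v by (rule ID1)
  have I2: "A1 r z (Jmul v) - B1 F r z (Jmul v) = - 2 * C1 F r z v" for z v by (rule ID2)
  have hypsym: "(- Cf F r z)^2 \<le> Bf F r z * Af r z" "B1 F r z v - A1 r z v = 2 * (- C1 F r z (Jmul v))"
    "B1 F r z (Jmul v) - A1 r z (Jmul v) = -2 * (- C1 F r z v)" for z v
    using CS_C[of F r z] ID1[of r z v F] ID2[of r z v F] by (auto simp: mult.commute)
  have rho1: "rho1 z = r^2 * Af r z" for z using rho1_eq[OF r0] .
  have rho2: "rho2 k z = r^2 * Bf F r z" for z using rho2_eq[OF r0] unfolding F_def .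
  have rr: "r^2 * (3/4) * (8/3 * ((norm v)^2 / r^2)) = 2 * (norm v)^2" for v using r0 by (simp add: field_simps)
  have V: "z \<in> Vset k (D * r) \<longleftrightarrow> Af r z < 1/1000000 \<or> Bf F r z < 1/1000000" for z
  proof -
    have D0: "0 < D" by (simp add: D_def)
    show ?thesis unfolding Vset_def rho1 rho2 by (simp add: sqrt_lt_iff[OF r D0] D2)
  qed
  have ge1: "sqrt (rho1 z) \<ge> r \<longleftrightarrow> Af r z \<ge> 1" "sqrt (rho2 k z) \<ge> r \<longleftrightarrow> Bf F r z \<ge> 1" for z
    unfolding rho1 rho2 using sqrt_lt_iff[OF r, of 1] by (simp_all add: not_less[symmetric])
  have gt1: "sqrt (rho1 z) > r \<longleftrightarrow> Af r z > 1" "sqrt (rho2 k z) > r \<longleftrightarrow> Bf F r z > 1" for z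
  proof -
    have e: "sqrt (r^2 * A) = r * sqrt A" for A using r by (simp add: real_sqrt_mult)
    have "sqrt (r^2 * A) > r \<longleftrightarrow> A > 1" for A
    proof -
      have "sqrt (r^2 * A) > r \<longleftrightarrow> r * sqrt A > r * 1" unfolding e by simp
      also have "\<dots> \<longleftrightarrow> sqrt A > sqrt 1" using r by simp
      also have "\<dots> \<longleftrightarrow> A > 1" by (rule real_sqrt_less_iff)
      finally show ?thesis .
    qed
    then show "sqrt (rho1 z) > r \<longleftrightarrow> Af r z > 1" "sqrt (rho2 k z) > r \<longleftrightarrow> Bf F r z > 1"
      unfolding rho1 rho2 by simp_all
  qed
  show ?thesis
  proof (rule exI[of _ D], rule exI[of _ "beta F r"], intro conjI)
  show "0 < D" "D < 1" unfolding D_def by simp_all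
  show "\<forall>z. 0 \<le> beta F r z" using beta_nonneg by blast
  show "C2_on UNIV (beta F r)" using C2D_C2_on[OF C] .
  show "weakly_psh_on (Vset k (D * r)) (beta F r)"
    unfolding weakly_psh_on_def
  proof (intro conjI ballI allI)
    show "C2_on (Vset k (D * r)) (beta F r)" using C2D_C2_on[OF C] .
    fix p v :: "complex ^ ('n::{finite,linorder})" assume "p \<in> Vset k (D * r)"
    then consider "Af r p < 1/1000000" | "Bf F r p < 1/1000000" using V by blast
    then show "0 \<le> levi_form (beta F r) p v"
    proof cases
      case 1
      have "0 \<le> levF (Af r p) (Bf F r p) (Cf F r p) (A1 r p v) (A1 r p (Jmul v)) (B1 F r p v) (B1 F r p (Jmul v))
          (C1 F r p v) (C1 F r p (Jmul v)) (2 * ((norm v)^2 / r^2)) (2 * ((norm v)^2 / r^2)) 0"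
        by (rule levF_strip(1)[OF A_nonneg 1 B_nonneg CS_C nu0 MA' MB' I1 I2])
      then show ?thesis unfolding LEV by simp
    next
      case 2
      have "0 \<le> levF (Bf F r p) (Af r p) (- Cf F r p) (B1 F r p v) (B1 F r p (Jmul v)) (A1 r p v) (A1 r p (Jmul v))
          (- C1 F r p v) (- C1 F r p (Jmul v)) (2 * ((norm v)^2 / r^2)) (2 * ((norm v)^2 / r^2)) 0"
        by (rule levF_strip(1)[OF B_nonneg 2 A_nonneg hypsym(1) nu0 MB' MA' hypsym(2,3)])
      then show ?thesis unfolding LEVsym by simp
    qed
  qed
  show "\<forall>z\<in>Vset k (D * r). r \<le> sqrt (rho1 z) \<longrightarrow> beta F r z = rho2 k z"
  proof (intro ballI impI)
    fix z :: "complex ^ ('n::{finite,linorder})" assume z: "z \<in> Vset k (D * r)" and "r \<le> sqrt (rho1 z)"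
    then have a: "1 \<le> Af r z" using ge1 by blast
    then have b: "Bf F r z \<le> 1/2" using V z by auto
    show "beta F r z = rho2 k z" unfolding beta_def rho2 G_high[OF a] G_low[OF b] by simp
  qed
  show "\<forall>z\<in>Vset k (D * r). r \<le> sqrt (rho2 k z) \<longrightarrow> beta F r z = rho1 z"
  proof (intro ballI impI)
    fix z :: "complex ^ ('n::{finite,linorder})" assume z: "z \<in> Vset k (D * r)" and "r \<le> sqrt (rho2 k z)"
    then have b: "1 \<le> Bf F r z" using ge1 by blast
    then have a: "Af r z \<le> 1/2" using V z by auto
    show "beta F r z = rho1 z" unfolding beta_def rho1 G_high[OF b] G_low[OF a] by simp
  qed
  show "\<forall>z. rho1 z = 0 \<longrightarrow> beta F r z = 0 \<and> frechet_derivative (beta F r) (at z) = (\<lambda>v. 0)"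
  proof (intro allI impI)
    fix z :: "complex ^ ('n::{finite,linorder})" assume "rho1 z = 0"
    then have a: "Af r z = 0" using rho1[of z] r0 by simp
    then have c: "Cf F r z = 0" using CS_C[of F r z] by simp
    have g: "G0 (Af r z) = 0" using G_low[of 0] a by simp
    have d: "A1 r z v = 0" for v using A_zero[OF a] .
    show "beta F r z = 0 \<and> frechet_derivative (beta F r) (at z) = (\<lambda>v. 0)"
      unfolding C2D_frechet[OF C] fun_eq_iff L1 beta_def using g c d by simp
  qed
  show "\<forall>z. rho2 k z = 0 \<longrightarrow> beta F r z = 0 \<and> frechet_derivative (beta F r) (at z) = (\<lambda>v. 0)"
  proof (intro allI impI)
    fix z :: "complex ^ ('n::{finite,linorder})" assume "rho2 k z = 0"
    then have b: "Bf F r z = 0" using rho2[of z] r0 by simp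
    then have c: "Cf F r z = 0" using CS_C[of F r z] by simp
    have g: "G0 (Bf F r z) = 0" using G_low[of 0] b by simp
    have d: "B1 F r z v = 0" for v using B_zero[OF b] .
    show "beta F r z = 0 \<and> frechet_derivative (beta F r) (at z) = (\<lambda>v. 0)"
      unfolding C2D_frechet[OF C] fun_eq_iff L1 beta_def using g c d by simp
  qed
  show "levi_dominated_on UNIV (beta F r)"
    unfolding levi_dominated_on_def
  proof (intro exI[of _ 2250] conjI ballI allI)
    fix p v :: "complex ^ ('n::{finite,linorder})"
    have "\<bar>levF (Af r p) (Bf F r p) (Cf F r p) (A1 r p v) (A1 r p (Jmul v)) (B1 F r p v) (B1 F r p (Jmul v))
          (C1 F r p v) (C1 F r p (Jmul v)) (2 * ((norm v)^2 / r^2)) (2 * ((norm v)^2 / r^2)) 0\<bar> \<le> 3000 * ((norm v)^2 / r^2)"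
      by (rule levF_dom[OF A_nonneg B_nonneg CS_C nu0 MA' MB' I1 I2])
    then have "levF (Af r p) (Bf F r p) (Cf F r p) (A1 r p v) (A1 r p (Jmul v)) (B1 F r p v) (B1 F r p (Jmul v))
          (C1 F r p v) (C1 F r p (Jmul v)) (2 * ((norm v)^2 / r^2)) (2 * ((norm v)^2 / r^2)) 0 \<le> 3000 * ((norm v)^2 / r^2)" by simp
    then have "(r^2 * (3/4)) * levF (Af r p) (Bf F r p) (Cf F r p) (A1 r p v) (A1 r p (Jmul v)) (B1 F r p v) (B1 F r p (Jmul v))
          (C1 F r p v) (C1 F r p (Jmul v)) (2 * ((norm v)^2 / r^2)) (2 * ((norm v)^2 / r^2)) 0 \<le> (r^2 * (3/4)) * (3000 * ((norm v)^2 / r^2))"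
      by (rule mult_left_mono) simp
    also have "\<dots> = 2250 * (norm v)^2" using r0 by (simp add: field_simps)
    finally show "levi_form (beta F r) p v \<le> 2250 * (norm v)^2" unfolding LEV .
  qed simp
  show "levi_equiv_euclid_on ({z. r < sqrt (rho2 k z)} \<inter> Vset k (D * r)) (beta F r)"
    unfolding levi_equiv_euclid_on_def
  proof (rule exI[of _ "1::real"], rule conjI, simp, rule exI[of _ "3::real"], intro conjI ballI allI)
    fix p v :: "complex ^ ('n::{finite,linorder})" assume p: "p \<in> {z. r < sqrt (rho2 k z)} \<inter> Vset k (D * r)"
    then have b: "1 \<le> Bf F r p" using gt1 by auto
    then have a: "Af r p < 1/1000000" using V p by auto
    have "levF (Af r p) (Bf F r p) (Cf F r p) (A1 r p v) (A1 r p (Jmul v)) (B1 F r p v) (B1 F r p (Jmul v))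
          (C1 F r p v) (C1 F r p (Jmul v)) (2 * ((norm v)^2 / r^2)) (2 * ((norm v)^2 / r^2)) 0 = 8/3 * ((norm v)^2 / r^2)"
      by (rule levF_strip(2)[OF A_nonneg a B_nonneg CS_C nu0 MA' MB' I1 I2 b])
    then have "levi_form (beta F r) p v = 2 * (norm v)^2" unfolding LEV using rr[of v] by simp
    then show "1 * (norm v)^2 \<le> levi_form (beta F r) p v" "levi_form (beta F r) p v \<le> 3 * (norm v)^2" by simp_all
  qed simp_all
  show "levi_equiv_euclid_on ({z. r < sqrt (rho1 z)} \<inter> Vset k (D * r)) (beta F r)"
    unfolding levi_equiv_euclid_on_def
  proof (rule exI[of _ "1::real"], rule conjI, simp, rule exI[of _ "3::real"], intro conjI ballI allI)
    fix p v :: "complex ^ ('n::{finite,linorder})" assume p: "p \<in> {z. r < sqrt (rho1 z)} \<inter> Vset k (D * r)"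
    then have a: "1 \<le> Af r p" using gt1 by auto
    then have b: "Bf F r p < 1/1000000" using V p by auto
    have "levF (Bf F r p) (Af r p) (- Cf F r p) (B1 F r p v) (B1 F r p (Jmul v)) (A1 r p v) (A1 r p (Jmul v))
          (- C1 F r p v) (- C1 F r p (Jmul v)) (2 * ((norm v)^2 / r^2)) (2 * ((norm v)^2 / r^2)) 0 = 8/3 * ((norm v)^2 / r^2)"
      by (rule levF_strip(2)[OF B_nonneg b A_nonneg hypsym(1) nu0 MB' MA' hypsym(2,3) a])
    then have "levi_form (beta F r) p v = 2 * (norm v)^2" unfolding LEVsym using rr[of v] by simp
    then show "1 * (norm v)^2 \<le> levi_form (beta F r) p v" "levi_form (beta F r) p v \<le> 3 * (norm v)^2" by simp_all
  qed simp_all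
  qed
qed


theorem proposition2p7:
  fixes k :: nat
  assumes "k \<le> CARD('n::{finite,linorder})"
  shows "\<exists>r0>0. \<forall>r. 0 < r \<and> r < r0 \<longrightarrow>
    (\<exists>D (\<beta> :: complex ^ ('n::{finite,linorder}) \<Rightarrow> real). 0 < D \<and> D < 1 \<and>
       (\<forall>z. \<beta> z \<ge> 0) \<and>
       C2_on UNIV \<beta> \<and>
       weakly_psh_on (Vset k (D * r)) \<beta> \<and>
       (\<forall>z \<in> Vset k (D * r). sqrt (rho1 z) \<ge> r \<longrightarrow> \<beta> z = rho2 k z) \<and>
       (\<forall>z \<in> Vset k (D * r). sqrt (rho2 k z) \<ge> r \<longrightarrow> \<beta> z = rho1 z) \<and>
       (\<forall>z. rho1 z = 0 \<longrightarrow> \<beta> z = 0 \<and> frechet_derivative \<beta> (at z) = (\<lambda>v. 0)) \<and>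
       (\<forall>z. rho2 k z = 0 \<longrightarrow> \<beta> z = 0 \<and> frechet_derivative \<beta> (at z) = (\<lambda>v. 0)) \<and>
       levi_dominated_on UNIV \<beta> \<and>
       levi_equiv_euclid_on ({z. sqrt (rho2 k z) > r} \<inter> Vset k (D * r)) \<beta> \<and>
       levi_equiv_euclid_on ({z. sqrt (rho1 z) > r} \<inter> Vset k (D * r)) \<beta>)"
  apply (rule exI[of _ 1])
  apply (intro conjI allI impI)
   apply simp
  apply (rule main_r)
  apply simp
  done

end
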